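(* Let $\mathcal{F}$ be a $3$-uniform linear family and $\mathcal{M}$ a maximum matching of $\mathcal{F}$. Then for all distinct $A,B\in\mathcal{M}$, $|D_2(A,B)|\leq 8$.
   Context: A family is a finite collection of distinct subsets of a vertex set; $3$-uniform means every member has exactly $3$ elements and linear means any two distinct members share at most one vertex. A matching is a collection of pairwise disjoint members; a maximum matching is one of largest possible size. $X_{\mathcal{M}}=\bigcup_{A\in\mathcal{M}}A$, $D_2(\mathcal{F})=\{E\in\mathcal{F}:|E\cap X_{\mathcal{M}}|=2\}$, and for $A,B\in\mathcal{M}$, $D_2(A,B)=\{C\in D_2(\mathcal{F}): C\cap A\neq\emptyset,\ C\cap B\neq\emptyset\}$. *)

theory Defs
  imports Main
begin

definition uniform3 :: "'a set set \<Rightarrow> bool" where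
  "uniform3 F \<longleftrightarrow> (\<forall>E\<in>F. card E = 3)"

definition linear_family :: "'a set set \<Rightarrow> bool" where
  "linear_family F \<longleftrightarrow> (\<forall>E\<in>F. \<forall>E'\<in>F. E \<noteq> E' \<longrightarrow> card (E \<inter> E') \<le> 1)"

definition matching :: "'a set set \<Rightarrow> 'a set set \<Rightarrow> bool" where
  "matching F M \<longleftrightarrow> M \<subseteq> F \<and> (\<forall>A\<in>M. \<forall>B\<in>M. A \<noteq> B \<longrightarrow> A \<inter> B = {})"

definition maximum_matching :: "'a set set \<Rightarrow> 'a set set \<Rightarrow> bool" where
  "maximum_matching F M \<longleftrightarrow> matching F M \<and> (\<forall>M'. matching F M' \<longrightarrow> card M' \<le> card M)"

definition D2 :: "'a set set \<Rightarrow> 'a set set \<Rightarrow> 'a set set" where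
  "D2 F M = {E\<in>F. card (E \<inter> \<Union>M) = 2}"

definition D2_pair :: "'a set set \<Rightarrow> 'a set set \<Rightarrow> 'a set \<Rightarrow> 'a set \<Rightarrow> 'a set set" where
  "D2_pair F M A B = {C\<in>D2 F M. C \<inter> A \<noteq> {} \<and> C \<inter> B \<noteq> {}}"

end

theory Submission
  imports Defs
begin

lemma rainbow:
  fixes c11 c12 c13 c21 c22 c23 c31 c32 c33 :: 'a
  assumes "c11\<noteq>c12" "c11\<noteq>c13" "c12\<noteq>c13" "c21\<noteq>c22" "c21\<noteq>c23" "c22\<noteq>c23"
    "c31\<noteq>c32" "c31\<noteq>c33" "c32\<noteq>c33"
    "c11\<noteq>c21" "c11\<noteq>c31" "c21\<noteq>c31" "c12\<noteq>c22" "c12\<noteq>c32" "c22\<noteq>c32"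
    "c13\<noteq>c23" "c13\<noteq>c33" "c23\<noteq>c33"
  shows "(c11\<noteq>c22 \<and> c11\<noteq>c33 \<and> c22\<noteq>c33) \<or> (c11\<noteq>c23 \<and> c11\<noteq>c32 \<and> c23\<noteq>c32) \<or>
         (c12\<noteq>c21 \<and> c12\<noteq>c33 \<and> c21\<noteq>c33) \<or> (c12\<noteq>c23 \<and> c12\<noteq>c31 \<and> c23\<noteq>c31) \<or>
         (c13\<noteq>c21 \<and> c13\<noteq>c32 \<and> c21\<noteq>c32) \<or> (c13\<noteq>c22 \<and> c13\<noteq>c31 \<and> c22\<noteq>c31)"
  using assms by smt

lemma aug:
  assumes fin: "finite F" and mm: "maximum_matching F M"
    and AM: "A \<in> M" and BM: "B \<in> M" and AB: "A \<noteq> B"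
    and F1: "{a1,b1,c1} \<in> F" and F2: "{a2,b2,c2} \<in> F" and F3: "{a3,b3,c3} \<in> F"
    and a: "a1 \<in> A" "a2 \<in> A" "a3 \<in> A" "a1 \<noteq> a2" "a1 \<noteq> a3" "a2 \<noteq> a3"
    and b: "b1 \<in> B" "b2 \<in> B" "b3 \<in> B" "b1 \<noteq> b2" "b1 \<noteq> b3" "b2 \<noteq> b3"
    and c: "c1 \<noteq> c2" "c1 \<noteq> c3" "c2 \<noteq> c3" "c1 \<notin> \<Union>M" "c2 \<notin> \<Union>M" "c3 \<notin> \<Union>M"
  shows False
proof -
  have mat: "matching F M" and mx: "\<And>M'. matching F M' \<Longrightarrow> card M' \<le> card M"
    using mm unfolding maximum_matching_def by auto
  have MF: "M \<subseteq> F" and disj: "\<And>X Y. X \<in> M \<Longrightarrow> Y \<in> M \<Longrightarrow> X \<noteq> Y \<Longrightarrow> X \<inter> Y = {}"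
    using mat unfolding matching_def by auto
  have finM: "finite M" using MF fin finite_subset by blast
  have ABd: "A \<inter> B = {}" using disj AM BM AB by blast
  define M0 where "M0 = M - {A,B}"
  define M' where "M' = insert {a1,b1,c1} (insert {a2,b2,c2} (insert {a3,b3,c3} M0))"
  have aU: "a1 \<in> \<Union>M" "a2 \<in> \<Union>M" "a3 \<in> \<Union>M" "b1 \<in> \<Union>M" "b2 \<in> \<Union>M" "b3 \<in> \<Union>M"
    using a b AM BM by auto
  have D0: "\<And>D. D \<in> M0 \<Longrightarrow> D \<inter> A = {} \<and> D \<inter> B = {}"
    unfolding M0_def using disj AM BM by blast
  have ab: "a1 \<noteq> b1" "a1 \<noteq> b2" "a1 \<noteq> b3" "a2 \<noteq> b1" "a2 \<noteq> b2" "a2 \<noteq> b3"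
     "a3 \<noteq> b1" "a3 \<noteq> b2" "a3 \<noteq> b3" using a b ABd by blast+
  have ac: "a1 \<noteq> c1" "a1 \<noteq> c2" "a1 \<noteq> c3" "a2 \<noteq> c1" "a2 \<noteq> c2" "a2 \<noteq> c3"
     "a3 \<noteq> c1" "a3 \<noteq> c2" "a3 \<noteq> c3"
     "b1 \<noteq> c1" "b1 \<noteq> c2" "b1 \<noteq> c3" "b2 \<noteq> c1" "b2 \<noteq> c2" "b2 \<noteq> c3"
     "b3 \<noteq> c1" "b3 \<noteq> c2" "b3 \<noteq> c3" using aU c by metis+
  have Dc: "\<And>D. D \<in> M0 \<Longrightarrow> c1 \<notin> D \<and> c2 \<notin> D \<and> c3 \<notin> D"
    using c unfolding M0_def by blast
  have matM': "matching F M'"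
    unfolding matching_def M'_def
  proof (intro conjI)
    show "insert {a1, b1, c1} (insert {a2, b2, c2} (insert {a3, b3, c3} M0)) \<subseteq> F"
      using MF F1 F2 F3 unfolding M0_def by blast
    show "\<forall>X\<in>insert {a1, b1, c1} (insert {a2, b2, c2} (insert {a3, b3, c3} M0)).
       \<forall>Y\<in>insert {a1, b1, c1} (insert {a2, b2, c2} (insert {a3, b3, c3} M0)). X \<noteq> Y \<longrightarrow> X \<inter> Y = {}"
    proof (intro ballI impI)
      fix X Y assume X: "X \<in> insert {a1, b1, c1} (insert {a2, b2, c2} (insert {a3, b3, c3} M0))"
        and Y: "Y \<in> insert {a1, b1, c1} (insert {a2, b2, c2} (insert {a3, b3, c3} M0))" and XY: "X \<noteq> Y"
      have M0M: "M0 \<subseteq> M" unfolding M0_def by blast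
      have dd: "\<And>D. D \<in> M0 \<Longrightarrow> D \<inter> {a1,b1,c1} = {} \<and> D \<inter> {a2,b2,c2} = {} \<and> D \<inter> {a3,b3,c3} = {}"
        using D0 Dc a b by blast
      show "X \<inter> Y = {}"
        using X Y XY dd disj M0M a b c ab ac
        apply (simp only: insert_iff)
        apply (elim disjE)
        by (auto)
    qed
  qed
  have n1: "{a1,b1,c1} \<notin> M0" "{a2,b2,c2} \<notin> M0" "{a3,b3,c3} \<notin> M0"
    using c unfolding M0_def by blast+
  have n2: "{a1,b1,c1} \<noteq> {a2,b2,c2}" "{a1,b1,c1} \<noteq> {a3,b3,c3}" "{a2,b2,c2} \<noteq> {a3,b3,c3}"
    using ac c by (metis insertCI insertE empty_iff)+
  have finM0: "finite M0" using finM unfolding M0_def by simp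
  have cM0: "card M0 = card M - 2"
    unfolding M0_def using AM BM AB finM by (simp add: card_Diff_subset)
  have c2: "card M \<ge> 2"
  proof -
    have "card {A,B} \<le> card M" using AM BM finM by (intro card_mono) auto
    thus ?thesis using AB by simp
  qed
  have "card M' = card M0 + 3"
    unfolding M'_def using n1 n2 finM0 by simp
  hence "card M' = card M + 1" using cM0 c2 by simp
  with mx[OF matM'] show False by simp
qed

theorem proposition3:
  fixes F M :: "'a set set" and A B :: "'a set"
  assumes "finite F"
    and "uniform3 F"
    and "linear_family F"
    and "maximum_matching F M"
    and "A \<in> M" and "B \<in> M" and "A \<noteq> B"
  shows "card (D2_pair F M A B) \<le> 8"
proof -
  have u3: "\<And>E. E \<in> F \<Longrightarrow> card E = 3" using assms(2) unfolding uniform3_def by auto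
  have lin: "\<And>E E'. E \<in> F \<Longrightarrow> E' \<in> F \<Longrightarrow> E \<noteq> E' \<Longrightarrow> card (E \<inter> E') \<le> 1"
    using assms(3) unfolding linear_family_def by auto
  have mat: "matching F M" using assms(4) unfolding maximum_matching_def by auto
  have MF: "M \<subseteq> F" and disj: "\<And>X Y. X \<in> M \<Longrightarrow> Y \<in> M \<Longrightarrow> X \<noteq> Y \<Longrightarrow> X \<inter> Y = {}"
    using mat unfolding matching_def by auto
  have ABd: "A \<inter> B = {}" using disj assms(5-7) by blast
  let ?D = "D2_pair F M A B"
  have DF: "?D \<subseteq> F" unfolding D2_pair_def D2_def by auto
  have finD: "finite ?D" using DF assms(1) finite_subset by blast
  have char: "\<exists>c. C = {a,b,c} \<and> c \<notin> \<Union>M"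
    if C: "C \<in> ?D" and a: "a \<in> C" "a \<in> A" and b: "b \<in> C" "b \<in> B" for C a b
  proof -
    have CF: "C \<in> F" and c2: "card (C \<inter> \<Union>M) = 2" using C unfolding D2_pair_def D2_def by auto
    have c3: "card C = 3" using u3 CF by auto
    have finC: "finite C" using c3 card.infinite by fastforce
    have ab: "a \<noteq> b" using a b ABd by blast
    have aM: "a \<in> \<Union>M" "b \<in> \<Union>M" using a b assms(5,6) by auto
    have sub: "{a,b} \<subseteq> C \<inter> \<Union>M" using a b aM by blast
    have cab: "card {a,b} = 2" using ab by simp
    have finCM: "finite (C \<inter> \<Union>M)" using finC by simp
    have I: "{a,b} = C \<inter> \<Union>M"
      by (rule card_seteq[OF finCM sub]) (simp only: cab c2)
    have "card (C - \<Union>M) = 1"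
    proof -
      have "C - \<Union>M = C - (C \<inter> \<Union>M)" by (simp only: Diff_Int Diff_cancel Un_empty_left)
      hence "card (C - \<Union>M) = card C - card (C \<inter> \<Union>M)" using finC by (simp only: card_Diff_subset[OF finCM Int_lower1])
      thus ?thesis using c2 c3 by simp
    qed
    then obtain c where c: "C - \<Union>M = {c}" using card_1_singleton_iff[THEN iffD1] One_nat_def by metis
    have "C = (C \<inter> \<Union>M) \<union> (C - \<Union>M)" by (rule Int_Diff_Un[symmetric])
    also have "\<dots> = {a,b} \<union> {c}" by (simp only: I c)
    also have "\<dots> = {a,b,c}" by auto
    finally have "C = {a,b,c}" .
    moreover have "c \<in> C - \<Union>M" using c by simp
    hence "c \<notin> \<Union>M" by simp
    ultimately show ?thesis by blast
  qed
  define S where "S p = {C \<in> ?D. fst p \<in> C \<and> snd p \<in> C}" for p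
  have S1: "card (S p) \<le> 1" if p: "p \<in> A \<times> B" for p
  proof -
    have "finite (S p)" using finD unfolding S_def by simp
    moreover have "\<forall>X\<in>S p. \<forall>Y\<in>S p. X = Y"
    proof (intro ballI, rule ccontr)
      fix X Y assume X: "X \<in> S p" and Y: "Y \<in> S p" and XY: "X \<noteq> Y"
      have "fst p \<noteq> snd p" using p ABd by auto
      hence "card {fst p, snd p} = 2" by simp
      have "X \<in> F" using X DF unfolding S_def by auto
      hence "card X = 3" using u3 by auto
      hence "finite X" using card.infinite by fastforce
      hence finXY: "finite (X \<inter> Y)" by simp
      have "{fst p, snd p} \<subseteq> X \<inter> Y" using X Y unfolding S_def by auto
      hence "card {fst p, snd p} \<le> card (X \<inter> Y)" using finXY by (rule card_mono[rotated])
      with \<open>card {fst p, snd p} = 2\<close> have "card (X \<inter> Y) \<ge> 2" by simp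
      moreover have "card (X \<inter> Y) \<le> 1" using lin X Y XY DF unfolding S_def by auto
      ultimately show False by simp
    qed
    ultimately show ?thesis using card_le_Suc0_iff_eq by (metis One_nat_def)
  qed
  have cover: "?D \<subseteq> (\<Union>p\<in>A \<times> B. S p)"
  proof
    fix C assume C: "C \<in> ?D"
    then obtain a b where "a \<in> C" "a \<in> A" "b \<in> C" "b \<in> B" unfolding D2_pair_def by blast
    thus "C \<in> (\<Union>p\<in>A \<times> B. S p)" using C unfolding S_def by force
  qed
  have cA: "card A = 3" and cB: "card B = 3" using u3 MF assms(5,6) by auto
  have finA: "finite A" and finB: "finite B" using cA cB card.infinite by fastforce+
  show ?thesis
  proof (cases "\<forall>p\<in>A \<times> B. S p \<noteq> {}")
    case False
    then obtain p0 where p0: "p0 \<in> A \<times> B" "S p0 = {}" by blast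
    have "?D \<subseteq> (\<Union>p\<in>A \<times> B - {p0}. S p)" using cover p0 by blast
    hence "card ?D \<le> card (\<Union>p\<in>A \<times> B - {p0}. S p)"
      using finA finB S1 by (intro card_mono) (auto simp: S_def finD)
    also have "\<dots> \<le> (\<Sum>p\<in>A \<times> B - {p0}. card (S p))" using finA finB by (intro card_UN_le) auto
    also have "\<dots> \<le> (\<Sum>p\<in>A \<times> B - {p0}. 1)" using S1 by (intro sum_mono) auto
    also have "\<dots> = 8" using p0 cA cB finA finB by (simp add: card_cartesian_product)
    finally show ?thesis .
  next
    case True
    have "\<forall>x\<in>A. \<forall>y\<in>B. \<exists>c. {x,y,c} \<in> F \<and> c \<notin> \<Union>M"
    proof (intro ballI)
      fix x y assume xy: "x \<in> A" "y \<in> B"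
      then obtain C where C: "C \<in> S (x,y)" using True by fastforce
      hence "C \<in> ?D" "x \<in> C" "y \<in> C" unfolding S_def by auto
      then obtain c where "C = {x,y,c}" "c \<notin> \<Union>M" using char xy by blast
      thus "\<exists>c. {x,y,c} \<in> F \<and> c \<notin> \<Union>M" using \<open>C \<in> ?D\<close> DF by blast
    qed
    then obtain g where g: "\<And>x y. x \<in> A \<Longrightarrow> y \<in> B \<Longrightarrow> {x,y,g x y} \<in> F \<and> g x y \<notin> \<Union>M"
      by metis
    have gF: "\<And>x y. x \<in> A \<Longrightarrow> y \<in> B \<Longrightarrow> {x,y,g x y} \<in> F" and gM: "\<And>x y. x \<in> A \<Longrightarrow> y \<in> B \<Longrightarrow> g x y \<notin> \<Union>M"
      using g by auto
    have gU: "g x y \<notin> A \<and> g x y \<notin> B" if "x \<in> A" "y \<in> B" for x y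
      using g[OF that] assms(5,6) by blast
    have row: "g x y \<noteq> g x y'" if "x \<in> A" "y \<in> B" "y' \<in> B" "y \<noteq> y'" for x y y'
    proof
      assume eq: "g x y = g x y'"
      have "y' \<notin> {x,y,g x y}" using that gU[OF that(1,2)] gU[OF that(1,3)] ABd by auto
      hence ne: "{x,y,g x y} \<noteq> {x,y',g x y'}" by auto
      have "x \<noteq> g x y" using gU[OF that(1,2)] that(1) by metis
      hence "card {x, g x y} = 2" by simp
      moreover have "{x, g x y} \<subseteq> {x,y,g x y} \<inter> {x,y',g x y'}" using eq by blast
      ultimately have "card ({x,y,g x y} \<inter> {x,y',g x y'}) \<ge> 2" by (metis card_mono finite.emptyI finite.insertI finite_Int)
      moreover have "card ({x,y,g x y} \<inter> {x,y',g x y'}) \<le> 1" using lin[OF gF[OF that(1,2)] gF[OF that(1,3)] ne] by simp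
      ultimately show False by simp
    qed
    have col: "g x y \<noteq> g x' y" if "x \<in> A" "x' \<in> A" "y \<in> B" "x \<noteq> x'" for x x' y
    proof
      assume eq: "g x y = g x' y"
      have "x' \<notin> {x,y,g x y}" using that gU[OF that(1,3)] gU[OF that(2,3)] ABd by auto
      hence ne: "{x,y,g x y} \<noteq> {x',y,g x' y}" by auto
      have "y \<noteq> g x y" using gU[OF that(1,3)] that(3) by metis
      hence "card {y, g x y} = 2" by simp
      moreover have "{y, g x y} \<subseteq> {x,y,g x y} \<inter> {x',y,g x' y}" using eq by blast
      ultimately have "card ({x,y,g x y} \<inter> {x',y,g x' y}) \<ge> 2" by (metis card_mono finite.emptyI finite.insertI finite_Int)
      moreover have "card ({x,y,g x y} \<inter> {x',y,g x' y}) \<le> 1" using lin[OF gF[OF that(1,3)] gF[OF that(2,3)] ne] by simp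
      ultimately show False by simp
    qed
    obtain a1 a2 a3 where A3: "A = {a1,a2,a3}" "a1 \<noteq> a2" "a2 \<noteq> a3" "a1 \<noteq> a3"
      using cA card_3_iff by metis
    obtain b1 b2 b3 where B3: "B = {b1,b2,b3}" "b1 \<noteq> b2" "b2 \<noteq> b3" "b1 \<noteq> b3"
      using cB card_3_iff by metis
    have aA: "a1 \<in> A" "a2 \<in> A" "a3 \<in> A" using A3 by auto
    have bB: "b1 \<in> B" "b2 \<in> B" "b3 \<in> B" using B3 by auto
    note AUG = aug[OF assms(1,4,5,6,7)]
    have AUG: False if "x1 \<in> A" "x2 \<in> A" "x3 \<in> A" "x1 \<noteq> x2" "x1 \<noteq> x3" "x2 \<noteq> x3"
      "y1 \<in> B" "y2 \<in> B" "y3 \<in> B" "y1 \<noteq> y2" "y1 \<noteq> y3" "y2 \<noteq> y3"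
      "g x1 y1 \<noteq> g x2 y2" "g x1 y1 \<noteq> g x3 y3" "g x2 y2 \<noteq> g x3 y3" for x1 x2 x3 y1 y2 y3
      using aug[OF assms(1,4,5,6,7) gF[OF that(1,7)] gF[OF that(2,8)] gF[OF that(3,9)]
          that(1-12) that(13-15) gM[OF that(1,7)] gM[OF that(2,8)] gM[OF that(3,9)]] .
    have R: "(g a1 b1\<noteq>g a2 b2 \<and> g a1 b1\<noteq>g a3 b3 \<and> g a2 b2\<noteq>g a3 b3) \<or> (g a1 b1\<noteq>g a2 b3 \<and> g a1 b1\<noteq>g a3 b2 \<and> g a2 b3\<noteq>g a3 b2) \<or>
         (g a1 b2\<noteq>g a2 b1 \<and> g a1 b2\<noteq>g a3 b3 \<and> g a2 b1\<noteq>g a3 b3) \<or> (g a1 b2\<noteq>g a2 b3 \<and> g a1 b2\<noteq>g a3 b1 \<and> g a2 b3\<noteq>g a3 b1) \<or>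
         (g a1 b3\<noteq>g a2 b1 \<and> g a1 b3\<noteq>g a3 b2 \<and> g a2 b1\<noteq>g a3 b2) \<or> (g a1 b3\<noteq>g a2 b2 \<and> g a1 b3\<noteq>g a3 b1 \<and> g a2 b2\<noteq>g a3 b1)"
      apply (rule rainbow)
      apply (rule row; use aA bB B3 in simp; fail)+
      apply (rule col; use aA bB A3 in simp; fail)+
      done
    from R have False
    proof (elim disjE conjE)
      assume "g a1 b1\<noteq>g a2 b2" "g a1 b1\<noteq>g a3 b3" "g a2 b2\<noteq>g a3 b3"
      thus False using AUG[of a1 a2 a3 b1 b2 b3] aA bB A3 B3 by simp
    next
      assume "g a1 b1\<noteq>g a2 b3" "g a1 b1\<noteq>g a3 b2" "g a2 b3\<noteq>g a3 b2"
      thus False using AUG[of a1 a2 a3 b1 b3 b2] aA bB A3 B3 by simp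
    next
      assume "g a1 b2\<noteq>g a2 b1" "g a1 b2\<noteq>g a3 b3" "g a2 b1\<noteq>g a3 b3"
      thus False using AUG[of a1 a2 a3 b2 b1 b3] aA bB A3 B3 by simp
    next
      assume "g a1 b2\<noteq>g a2 b3" "g a1 b2\<noteq>g a3 b1" "g a2 b3\<noteq>g a3 b1"
      thus False using AUG[of a1 a2 a3 b2 b3 b1] aA bB A3 B3 by simp
    next
      assume "g a1 b3\<noteq>g a2 b1" "g a1 b3\<noteq>g a3 b2" "g a2 b1\<noteq>g a3 b2"
      thus False using AUG[of a1 a2 a3 b3 b1 b2] aA bB A3 B3 by simp
    next
      assume "g a1 b3\<noteq>g a2 b2" "g a1 b3\<noteq>g a3 b1" "g a2 b2\<noteq>g a3 b1"
      thus False using AUG[of a1 a2 a3 b3 b2 b1] aA bB A3 B3 by simp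
    qed
    thus ?thesis ..
  qed
qed

end
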